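(* For the $N$-relay 1-2-1 diamond network (context) with relays operating all in FD or all in HD, $\mathsf{C}_{\rm cs,iid}$ (computed with the state set of that mode) equals the optimal value of the linear program $$\mathrm{P1^d}:\ \max\sum_{p=1}^N x_p\mathsf C_p\ \text{ s.t. }\ 0\le x_p\le1\ \forall p\in[1:N];\quad \sum_{p=1}^N x_p\frac{\mathsf C_p}{\ell_{p,0}}\le1;\quad \sum_{p=1}^N x_p\frac{\mathsf C_p}{\ell_{N+1,p}}\le1,$$ where $\mathsf C_p=\min\{\ell_{p,0},\ell_{N+1,p}\}$ in the FD case and $\mathsf C_p=\frac{\ell_{p,0}\ell_{N+1,p}}{\ell_{p,0}+\ell_{N+1,p}}$ in the HD case.
   Context: Diamond network: nodes $[0:N+1]$, source $0$, destination $N+1$, relays $[1:N]$; the only links are $(0,p)$ and $(p,N+1)$ for $p\in[1:N]$, with positive rational capacities $\ell_{p,0}$ and $\ell_{N+1,p}$; all other $\ell_{j,i}=0$. Network states: a state $s$ consists of sets $s_{i,t}\subseteq[1:N+1]\setminus\{i\}$ and $s_{i,r}\subseteq[0:N]\setminus\{i\}$, each of cardinality at most $1$, for $i\in[0:N+1]$, with $s_{0,r}=s_{N+1,t}=\emptyset$; in FD mode there is no further constraint; in HD mode additionally $|s_{i,t}|+|s_{i,r}|\le1$ for $i\in[1:N]$. $\mathcal S$ is the set of all states of the mode. Link $(i,j)$ is active in $s$ if $j\in s_{i,t}$ and $i\in s_{j,r}$. $\mathsf{C}_{\rm cs,iid}=\max_{\lambda}\min_{\Omega}\sum_{i\in\Omega,\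 j\in\Omega^c}\big(\sum_{s\in\mathcal S:\ (i,j)\text{ active in }s}\lambda_s\big)\ell_{j,i}$, maximum over probability vectors $(\lambda_s)_{s\in\mathcal S}$, minimum over $\Omega$ with $0\in\Omega\subseteq[0:N]$, $\Omega^c=[0:N+1]\setminus\Omega$. *)

theory Defs
  imports "HOL-Analysis.Analysis"
begin

datatype mode = FD | HD

text \<open>Diamond network with nodes 0..N+1. lsrc p = capacity of link (0,p), i.e. l_{p,0};
  ldst p = capacity of link (p,N+1), i.e. l_{N+1,p}. General l_{j,i} (receiver j, transmitter i):\<close>
definition ell :: "nat \<Rightarrow> (nat \<Rightarrow> real) \<Rightarrow> (nat \<Rightarrow> real) \<Rightarrow> nat \<Rightarrow> nat \<Rightarrow> real" where
  "ell N lsrc ldst j i =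
     (if i = 0 \<and> j \<in> {1..N} then lsrc j
      else if j = N + 1 \<and> i \<in> {1..N} then ldst i else 0)"

type_synonym state = "(nat \<Rightarrow> nat set) \<times> (nat \<Rightarrow> nat set)"
  \<comment> \<open>(s_t, s_r): s_t i = s_{i,t}, s_r i = s_{i,r}; empty outside the node range\<close>

definition states :: "nat \<Rightarrow> mode \<Rightarrow> state set" where
  "states N m = {(st, sr).
     (\<forall>i. i \<notin> {0..N+1} \<longrightarrow> st i = {} \<and> sr i = {}) \<and>
     (\<forall>i\<in>{0..N+1}. st i \<subseteq> {1..N+1} - {i} \<and> card (st i) \<le> 1 \<and>
                    sr i \<subseteq> {0..N} - {i} \<and> card (sr i) \<le> 1) \<and>
     sr 0 = {} \<and> st (N+1) = {} \<and>
     (m = HD \<longrightarrow> (\<forall>i\<in>{1..N}. card (st i) + card (sr i) \<le> 1))}"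

definition active :: "state \<Rightarrow> nat \<Rightarrow> nat \<Rightarrow> bool" where
  "active s i j \<longleftrightarrow> j \<in> fst s i \<and> i \<in> snd s j"

definition cut_value :: "nat \<Rightarrow> mode \<Rightarrow> (nat \<Rightarrow> real) \<Rightarrow> (nat \<Rightarrow> real) \<Rightarrow> (state \<Rightarrow> real)
    \<Rightarrow> nat set \<Rightarrow> real" where
  "cut_value N m lsrc ldst lam \<Omega> =
     (\<Sum>i\<in>\<Omega>. \<Sum>j\<in>{0..N+1} - \<Omega>.
        (\<Sum>s\<in>{s\<in>states N m. active s i j}. lam s) * ell N lsrc ldst j i)"

definition prob_vec :: "nat \<Rightarrow> mode \<Rightarrow> (state \<Rightarrow> real) \<Rightarrow> bool" where
  "prob_vec N m lam \<longleftrightarrow> (\<forall>s\<in>states N m. lam s \<ge> 0) \<and> (\<Sum>s\<in>states N m. lam s) = 1"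

definition C_cs_iid :: "nat \<Rightarrow> mode \<Rightarrow> (nat \<Rightarrow> real) \<Rightarrow> (nat \<Rightarrow> real) \<Rightarrow> real" where
  "C_cs_iid N m lsrc ldst =
     Sup ((\<lambda>lam. Min ((\<lambda>\<Omega>. cut_value N m lsrc ldst lam \<Omega>) ` {\<Omega>. 0 \<in> \<Omega> \<and> \<Omega> \<subseteq> {0..N}}))
          ` {lam. prob_vec N m lam})"

definition Cp :: "mode \<Rightarrow> (nat \<Rightarrow> real) \<Rightarrow> (nat \<Rightarrow> real) \<Rightarrow> nat \<Rightarrow> real" where
  "Cp m lsrc ldst p =
     (if m = FD then min (lsrc p) (ldst p)
      else lsrc p * ldst p / (lsrc p + ldst p))"

definition P1d_feasible :: "nat \<Rightarrow> mode \<Rightarrow> (nat \<Rightarrow> real) \<Rightarrow> (nat \<Rightarrow> real) \<Rightarrow> (nat \<Rightarrow> real) \<Rightarrow> bool" where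
  "P1d_feasible N m lsrc ldst x \<longleftrightarrow>
     (\<forall>p\<in>{1..N}. 0 \<le> x p \<and> x p \<le> 1) \<and>
     (\<Sum>p=1..N. x p * Cp m lsrc ldst p / lsrc p) \<le> 1 \<and>
     (\<Sum>p=1..N. x p * Cp m lsrc ldst p / ldst p) \<le> 1"

definition P1d_opt :: "nat \<Rightarrow> mode \<Rightarrow> (nat \<Rightarrow> real) \<Rightarrow> (nat \<Rightarrow> real) \<Rightarrow> real" where
  "P1d_opt N m lsrc ldst =
     Sup ((\<lambda>x. \<Sum>p=1..N. x p * Cp m lsrc ldst p) ` {x. P1d_feasible N m lsrc ldst x})"

end

theory Submission
  imports Defs
begin


definition ov :: "real \<Rightarrow> real \<Rightarrow> real \<Rightarrow> real \<Rightarrow> real" where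
  "ov u1 u2 v1 v2 = max 0 (min u2 v2 - max u1 v1)"

lemma ov_nonneg: "ov u1 u2 v1 v2 \<ge> 0" by (simp add: ov_def)
lemma ov_sym: "ov u1 u2 v1 v2 = ov v1 v2 u1 u2" by (simp add: ov_def min.commute max.commute)
lemma ov_add: "v1 \<le> v2 \<Longrightarrow> v2 \<le> v3 \<Longrightarrow> ov u1 u2 v1 v2 + ov u1 u2 v2 v3 = ov u1 u2 v1 v3"
  by (simp add: ov_def max_def min_def)
lemma ov_shift: "ov u1 u2 (v1 - 1) (v2 - 1) = ov (u1 + 1) (u2 + 1) v1 v2"
  by (simp add: ov_def max_def min_def)
lemma ov_shift2: "ov (v1 - 1) (v2 - 1) u1 u2 = ov v1 v2 (u1 + 1) (u2 + 1)"
  by (simp add: ov_def max_def min_def)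
lemma ov_inside: "u1 \<le> v1 \<Longrightarrow> v1 \<le> v2 \<Longrightarrow> v2 \<le> u2 \<Longrightarrow> ov u1 u2 v1 v2 = v2 - v1"
  by (simp add: ov_def max_def min_def)

lemma ov_tile:
  assumes "\<And>k. k < n \<Longrightarrow> c k \<le> c (Suc k)"
  shows "(\<Sum>k\<in>{1..n}. ov u1 u2 (c (k - 1)) (c k)) = ov u1 u2 (c 0) (c n)"
  using assms
proof (induction n)
  case 0
  then show ?case by (simp add: ov_def)
next
  case (Suc n)
  have mono: "c 0 \<le> c n"
  proof -
    have "\<And>j. j \<le> n \<Longrightarrow> c 0 \<le> c j"
    proof -
      fix j assume "j \<le> n" then show "c 0 \<le> c j"
        using Suc.prems by (induction j) (auto intro: order_trans)
    qed
    then show ?thesis by simp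
  qed
  have "(\<Sum>k\<in>{1..Suc n}. ov u1 u2 (c (k - 1)) (c k)) = (\<Sum>k\<in>{1..n}. ov u1 u2 (c (k - 1)) (c k)) + ov u1 u2 (c n) (c (Suc n))"
    by (simp add: sum.cl_ivl_Suc)
  also have "\<dots> = ov u1 u2 (c 0) (c n) + ov u1 u2 (c n) (c (Suc n))"
    using Suc by simp
  also have "\<dots> = ov u1 u2 (c 0) (c (Suc n))"
    using mono Suc.prems by (intro ov_add) auto
  finally show ?case .
qed

definition cum :: "(nat \<Rightarrow> real) \<Rightarrow> nat \<Rightarrow> real" where "cum a k = sum a {1..k}"

lemma cum_0[simp]: "cum a 0 = 0" by (simp add: cum_def)
lemma cum_Suc: "cum a (Suc k) = cum a k + a (Suc k)" by (simp add: cum_def sum.cl_ivl_Suc)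

lemma cum_mono: assumes "\<forall>i\<in>{1..N}. a i \<ge> 0" "j \<le> k" "k \<le> N" shows "cum a j \<le> cum a k"
  unfolding cum_def using assms by (intro sum_mono2) auto

lemma cum_nonneg: assumes "\<forall>i\<in>{1..N}. a i \<ge> 0" "k \<le> N" shows "cum a k \<ge> 0"
  using cum_mono[OF assms(1), of 0 k] assms by simp


definition lo :: "(nat \<Rightarrow> real) \<Rightarrow> nat \<Rightarrow> nat \<Rightarrow> real" where
  "lo a N p = (if p = 0 then cum a N else cum a (p - 1))"
definition hi :: "(nat \<Rightarrow> real) \<Rightarrow> nat \<Rightarrow> nat \<Rightarrow> real" where
  "hi a N p = (if p = 0 then 1 else cum a p)"
definition pii :: "(nat \<Rightarrow> real) \<Rightarrow> (nat \<Rightarrow> real) \<Rightarrow> nat \<Rightarrow> real \<Rightarrow> nat \<Rightarrow> nat \<Rightarrow> real" where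
  "pii a b N s p q = ov (lo a N p) (hi a N p) (s + lo b N q) (s + hi b N q)
      + ov (lo a N p) (hi a N p) (s + lo b N q - 1) (s + hi b N q - 1)"

lemma pii_nonneg: "pii a b N s p q \<ge> 0" by (simp add: pii_def ov_nonneg)

lemma lohi: assumes "\<forall>i\<in>{1..N}. a i \<ge> 0" "cum a N \<le> 1" "p \<le> N"
  shows "0 \<le> lo a N p" "lo a N p \<le> hi a N p" "hi a N p \<le> 1"
proof -
  show "0 \<le> lo a N p" using cum_nonneg[OF assms(1)] assms by (simp add: lo_def)
  show "lo a N p \<le> hi a N p" using cum_mono[OF assms(1)] assms by (simp add: lo_def hi_def)
  show "hi a N p \<le> 1" using cum_mono[OF assms(1), of p N] assms by (simp add: hi_def)
qed

lemma cum_step: assumes "\<forall>i\<in>{1..N}. a i \<ge> 0" shows "\<And>k. k < N \<Longrightarrow> cum a k \<le> cum a (Suc k)"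
  using assms by (auto simp: cum_Suc)

lemma pii_row:
  assumes a: "\<forall>i\<in>{1..N}. a i \<ge> 0" "cum a N \<le> 1"
    and b: "\<forall>i\<in>{1..N}. b i \<ge> 0" "cum b N \<le> 1"
    and s: "0 \<le> s" "s \<le> 1" and p: "p \<le> N"
  shows "(\<Sum>q\<in>{0..N}. pii a b N s p q) = hi a N p - lo a N p"
proof -
  define L where "L = lo a N p"
  define H where "H = hi a N p"
  have LH: "0 \<le> L" "L \<le> H" "H \<le> 1" using lohi[OF a p] by (auto simp: L_def H_def)
  have t1: "(\<Sum>q\<in>{1..N}. ov L H (s + lo b N q) (s + hi b N q)) = ov L H s (s + cum b N)"
  proof -
    have "(\<Sum>q\<in>{1..N}. ov L H (s + lo b N q) (s + hi b N q))
        = (\<Sum>q\<in>{1..N}. ov L H ((\<lambda>k. s + cum b k) (q - 1)) ((\<lambda>k. s + cum b k) q))"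
      by (intro sum.cong) (auto simp: lo_def hi_def)
    also have "\<dots> = ov L H s (s + cum b N)"
      by (subst ov_tile) (use cum_step[OF b(1)] in auto)
    finally show ?thesis .
  qed
  have t2: "(\<Sum>q\<in>{1..N}. ov L H (s + lo b N q - 1) (s + hi b N q - 1)) = ov L H (s - 1) (s + cum b N - 1)"
  proof -
    have "(\<Sum>q\<in>{1..N}. ov L H (s + lo b N q - 1) (s + hi b N q - 1))
        = (\<Sum>q\<in>{1..N}. ov L H ((\<lambda>k. s + cum b k - 1) (q - 1)) ((\<lambda>k. s + cum b k - 1) q))"
      by (intro sum.cong) (auto simp: lo_def hi_def)
    also have "\<dots> = ov L H (s - 1) (s + cum b N - 1)"
      by (subst ov_tile) (use cum_step[OF b(1)] in auto)
    finally show ?thesis .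
  qed
  have cb: "0 \<le> cum b N" using cum_nonneg[OF b(1)] by simp
  have "(\<Sum>q\<in>{0..N}. pii a b N s p q) = pii a b N s p 0 + (\<Sum>q\<in>{1..N}. pii a b N s p q)"
    by (simp add: sum.atLeast_Suc_atMost)
  also have "\<dots> = (ov L H (s + cum b N) (s + 1) + ov L H (s + cum b N - 1) (s + 1 - 1))
      + (ov L H s (s + cum b N) + ov L H (s - 1) (s + cum b N - 1))"
  proof -
    have e1: "(\<Sum>q\<in>{1..N}. pii a b N s p q) = ov L H s (s + cum b N) + ov L H (s - 1) (s + cum b N - 1)"
      unfolding t1[symmetric] t2[symmetric] sum.distrib[symmetric] by (simp add: pii_def L_def H_def)
    have e2: "pii a b N s p 0 = ov L H (s + cum b N) (s + 1) + ov L H (s + cum b N - 1) (s + 1 - 1)"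
      by (simp add: pii_def L_def H_def lo_def hi_def)
    show ?thesis using e1 e2 by simp
  qed
  also have "\<dots> = ov L H s (s + 1) + ov L H (s - 1) s"
    using ov_add[of s "s + cum b N" "s + 1" L H] ov_add[of "s - 1" "s + cum b N - 1" s L H] cb b(2)
    by simp
  also have "\<dots> = ov L H (s - 1) (s + 1)" using ov_add[of "s - 1" s "s + 1" L H] by simp
  also have "\<dots> = H - L" using LH s by (subst ov_sym, intro ov_inside) auto
  finally show ?thesis by (simp add: L_def H_def)
qed

lemma pii_col:
  assumes a: "\<forall>i\<in>{1..N}. a i \<ge> 0" "cum a N \<le> 1"
    and b: "\<forall>i\<in>{1..N}. b i \<ge> 0" "cum b N \<le> 1"
    and s: "0 \<le> s" "s \<le> 1" and q: "q \<le> N"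
  shows "(\<Sum>p\<in>{0..N}. pii a b N s p q) = hi b N q - lo b N q"
proof -
  define v1 where "v1 = s + lo b N q"
  define v2 where "v2 = s + hi b N q"
  have V: "0 \<le> v1" "v1 \<le> v2" "v2 \<le> 2" using lohi[OF b q] s by (auto simp: v1_def v2_def)
  have t1: "(\<Sum>p\<in>{1..N}. ov (lo a N p) (hi a N p) v1 v2) = ov v1 v2 0 (cum a N)"
  proof -
    have "(\<Sum>p\<in>{1..N}. ov (lo a N p) (hi a N p) v1 v2)
        = (\<Sum>p\<in>{1..N}. ov v1 v2 ((\<lambda>k. cum a k) (p - 1)) ((\<lambda>k. cum a k) p))"
      by (intro sum.cong) (auto simp: lo_def hi_def ov_sym)
    also have "\<dots> = ov v1 v2 0 (cum a N)"
      by (subst ov_tile) (use cum_step[OF a(1)] in auto)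
    finally show ?thesis .
  qed
  have t2: "(\<Sum>p\<in>{1..N}. ov (lo a N p) (hi a N p) (v1 - 1) (v2 - 1)) = ov v1 v2 1 (cum a N + 1)"
  proof -
    have "(\<Sum>p\<in>{1..N}. ov (lo a N p) (hi a N p) (v1 - 1) (v2 - 1))
        = (\<Sum>p\<in>{1..N}. ov v1 v2 ((\<lambda>k. cum a k + 1) (p - 1)) ((\<lambda>k. cum a k + 1) p))"
      by (intro sum.cong) (auto simp: lo_def hi_def ov_sym ov_shift2)
    also have "\<dots> = ov v1 v2 1 (cum a N + 1)"
      by (subst ov_tile) (use cum_step[OF a(1)] in auto)
    finally show ?thesis .
  qed
  have ca: "0 \<le> cum a N" using cum_nonneg[OF a(1)] by simp
  have "(\<Sum>p\<in>{0..N}. pii a b N s p q) = pii a b N s 0 q + (\<Sum>p\<in>{1..N}. pii a b N s p q)"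
    by (simp add: sum.atLeast_Suc_atMost)
  also have "\<dots> = (ov v1 v2 (cum a N) 1 + ov v1 v2 (cum a N + 1) 2)
      + (ov v1 v2 0 (cum a N) + ov v1 v2 1 (cum a N + 1))"
  proof -
    have e1: "(\<Sum>p\<in>{1..N}. pii a b N s p q) = ov v1 v2 0 (cum a N) + ov v1 v2 1 (cum a N + 1)"
      unfolding t1[symmetric] t2[symmetric] sum.distrib[symmetric] by (simp add: pii_def v1_def v2_def)
    have e2: "pii a b N s 0 q = ov v1 v2 (cum a N) 1 + ov v1 v2 (cum a N + 1) 2"
    proof -
      have "pii a b N s 0 q = ov (cum a N) 1 v1 v2 + ov (cum a N) 1 (v1 - 1) (v2 - 1)"
        by (simp add: pii_def v1_def v2_def lo_def hi_def)
      also have "\<dots> = ov v1 v2 (cum a N) 1 + ov (cum a N + 1) (1 + 1) v1 v2"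
        using ov_shift[of "cum a N" 1 v1 v2] ov_sym[of "cum a N" 1 v1 v2] by simp
      also have "\<dots> = ov v1 v2 (cum a N) 1 + ov v1 v2 (cum a N + 1) 2"
        using ov_sym[of "cum a N + 1" 2 v1 v2] by simp
      finally show ?thesis .
    qed
    show ?thesis using e1 e2 by simp
  qed
  also have "\<dots> = ov v1 v2 0 1 + ov v1 v2 1 2"
    using ov_add[of 0 "cum a N" 1 v1 v2] ov_add[of 1 "cum a N + 1" 2 v1 v2] ca a(2)
    by simp
  also have "\<dots> = ov v1 v2 0 2" using ov_add[of 0 1 2 v1 v2] by simp
  also have "\<dots> = v2 - v1" using V by (subst ov_sym, intro ov_inside) auto
  finally show ?thesis by (simp add: v1_def v2_def)
qed

lemma pii_diag:
  assumes "1 \<le> p" "p \<le> N" "cum a p - cum b (p - 1) \<le> s" "s + cum b p - 1 \<le> cum a (p - 1)"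
  shows "pii a b N s p p = 0"
  using assms by (simp add: pii_def lo_def hi_def ov_def max_def min_def)

lemma exists_s:
  assumes a: "\<forall>i\<in>{1..N}. a i \<ge> 0" "cum a N \<le> 1"
    and b: "\<forall>i\<in>{1..N}. b i \<ge> 0" "cum b N \<le> 1"
    and ab: "\<forall>p\<in>{1..N}. a p + b p \<le> 1"
  shows "\<exists>s. 0 \<le> s \<and> s \<le> 1 \<and> (\<forall>p\<in>{1..N}. cum a p - cum b (p - 1) \<le> s \<and> s + cum b p - 1 \<le> cum a (p - 1))"
proof -
  define S where "S = insert 0 ((\<lambda>p. cum a p - cum b (p - 1)) ` {1..N})"
  define s where "s = Max S"
  have fin: "finite S" "S \<noteq> {}" by (auto simp: S_def)
  have ge: "\<forall>p\<in>{1..N}. cum a p - cum b (p - 1) \<le> s"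
  proof
    fix p assume "p \<in> {1..N}"
    then have "cum a p - cum b (p - 1) \<in> S" by (auto simp: S_def)
    then show "cum a p - cum b (p - 1) \<le> s" unfolding s_def using fin by simp
  qed
  have s0: "0 \<le> s" unfolding s_def using fin by (auto simp: S_def)
  have sS: "s \<in> S" unfolding s_def using fin by simp
  have le1: "s \<le> 1"
  proof -
    have "\<forall>x\<in>S. x \<le> 1"
    proof
      fix x assume "x \<in> S"
      then show "x \<le> 1"
      proof (cases "x = 0")
        case False
        then obtain p where p: "p \<in> {1..N}" "x = cum a p - cum b (p - 1)" using \<open>x \<in> S\<close> by (auto simp: S_def)
        have "0 \<le> cum b (p - 1)" using cum_nonneg[OF b(1), of "p - 1"] p by auto
        then show ?thesis using cum_mono[OF a(1), of p N] a(2) p by auto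
      qed simp
    qed
    then show ?thesis using sS by blast
  qed
  have up: "\<forall>p\<in>{1..N}. s + cum b p - 1 \<le> cum a (p - 1)"
  proof
    fix p assume p: "p \<in> {1..N}"
    have ap: "0 \<le> cum a (p - 1)" using cum_nonneg[OF a(1), of "p - 1"] p by auto
    have bp: "cum b p \<le> 1" using cum_mono[OF b(1), of p N] b(2) p by auto
    show "s + cum b p - 1 \<le> cum a (p - 1)"
    proof (cases "s = 0")
      case True then show ?thesis using ap bp by simp
    next
      case False
      then obtain p' where p': "p' \<in> {1..N}" "s = cum a p' - cum b (p' - 1)" using sS by (auto simp: S_def)
      consider "p' < p" | "p' = p" | "p < p'" by linarith
      then show ?thesis
      proof cases
        case 1
        have "cum a p' \<le> cum a (p - 1)" using cum_mono[OF a(1), of p' "p - 1"] 1 p by auto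
        moreover have "cum b p \<le> cum b N" using cum_mono[OF b(1), of p N] p by auto
        moreover have "0 \<le> cum b (p' - 1)" using cum_nonneg[OF b(1), of "p' - 1"] p' by auto
        ultimately show ?thesis using p' b(2) by linarith
      next
        case 2
        have "cum a p = cum a (p - 1) + a p" using cum_Suc[of a "p - 1"] p by simp
        moreover have "cum b p = cum b (p - 1) + b p" using cum_Suc[of b "p - 1"] p by simp
        moreover have "a p + b p \<le> 1" using ab p by blast
        moreover have "s = cum a p - cum b (p - 1)" using p' 2 by simp
        ultimately show ?thesis by linarith
      next
        case 3
        have "cum a p' \<le> 1" using cum_mono[OF a(1), of p' N] p' a(2) by auto
        moreover have "cum b p \<le> cum b (p' - 1)" using cum_mono[OF b(1), of p "p' - 1"] 3 p' by auto
        ultimately show ?thesis using p' ap by linarith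
      qed
    qed
  qed
  show ?thesis using s0 le1 ge up by blast
qed



definition mk :: "nat \<Rightarrow> nat \<Rightarrow> nat \<Rightarrow> state" where
 "mk N p q = ((\<lambda>i. if i = 0 \<and> p \<in> {1..N} then {p} else if i = q \<and> q \<in> {1..N} then {N+1} else {}),
              (\<lambda>i. if i = N+1 \<and> q \<in> {1..N} then {q} else if i = p \<and> p \<in> {1..N} then {0} else {}))"

definition Dset :: "nat \<Rightarrow> mode \<Rightarrow> (nat \<times> nat) set" where
  "Dset N m = {(p,q). p \<le> N \<and> q \<le> N \<and> (m = FD \<or> p \<noteq> q \<or> p = 0)}"

definition lamOf :: "nat \<Rightarrow> mode \<Rightarrow> (nat \<Rightarrow> nat \<Rightarrow> real) \<Rightarrow> state \<Rightarrow> real" where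
  "lamOf N m w s = (\<Sum>d\<in>{d\<in>Dset N m. mk N (fst d) (snd d) = s}. w (fst d) (snd d))"

lemma finite_Dset: "finite (Dset N m)"
  by (rule finite_subset[of _ "{0..N} \<times> {0..N}"]) (auto simp: Dset_def)

lemma mk_in: assumes "(p,q) \<in> Dset N m" shows "mk N p q \<in> states N m"
  using assms unfolding Dset_def states_def mk_def
  by (cases m) (auto simp: card_insert_if)

lemma finite_states: "finite (states N m)"
proof -
  let ?F = "{f :: nat \<Rightarrow> nat set. \<forall>x. (x \<in> {0..N+1} \<longrightarrow> f x \<in> Pow {0..N+1}) \<and> (x \<notin> {0..N+1} \<longrightarrow> f x = {})}"
  have "finite ?F" by (rule finite_set_of_finite_funs) auto
  then have "finite (?F \<times> ?F)" by simp
  moreover have "states N m \<subseteq> ?F \<times> ?F"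
    unfolding states_def by fastforce
  ultimately show ?thesis by (rule finite_subset[rotated])
qed

lemma active_mk_src: "j \<in> {1..N} \<Longrightarrow> p \<le> N \<Longrightarrow> active (mk N p q) 0 j \<longleftrightarrow> p = j"
  by (auto simp: active_def mk_def)

lemma active_mk_dst: "j \<in> {1..N} \<Longrightarrow> q \<le> N \<Longrightarrow> active (mk N p q) j (N+1) \<longleftrightarrow> q = j"
  by (auto simp: active_def mk_def)

lemma lamOf_nonneg: "(\<And>p q. w p q \<ge> 0) \<Longrightarrow> lamOf N m w s \<ge> 0"
  unfolding lamOf_def by (intro sum_nonneg) auto

lemma lam_sum:
  "(\<Sum>s\<in>states N m. lamOf N m w s * g s) = (\<Sum>d\<in>Dset N m. w (fst d) (snd d) * g (mk N (fst d) (snd d)))"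
proof -
  have "(\<Sum>s\<in>states N m. lamOf N m w s * g s)
     = (\<Sum>s\<in>states N m. \<Sum>d\<in>Dset N m. if mk N (fst d) (snd d) = s then w (fst d) (snd d) * g s else 0)"
    unfolding lamOf_def
    by (intro sum.cong refl) (simp add: sum_distrib_right sum.inter_filter[OF finite_Dset]; intro sum.cong; auto)
  also have "\<dots> = (\<Sum>d\<in>Dset N m. \<Sum>s\<in>states N m. if mk N (fst d) (snd d) = s then w (fst d) (snd d) * g s else 0)"
    by (rule sum.swap)
  also have "\<dots> = (\<Sum>d\<in>Dset N m. w (fst d) (snd d) * g (mk N (fst d) (snd d)))"
  proof (intro sum.cong refl)
    fix d assume "d \<in> Dset N m"
    then have "mk N (fst d) (snd d) \<in> states N m" using mk_in[of "fst d" "snd d"] by simp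
    then show "(\<Sum>s\<in>states N m. if mk N (fst d) (snd d) = s then w (fst d) (snd d) * g s else 0)
        = w (fst d) (snd d) * g (mk N (fst d) (snd d))"
      using finite_states by (simp add: sum.delta)
  qed
  finally show ?thesis .
qed

lemma sumD:
  fixes w :: "nat \<Rightarrow> nat \<Rightarrow> real" and h :: "nat \<times> nat \<Rightarrow> real"
  assumes "m = HD \<Longrightarrow> \<forall>p\<in>{1..N}. w p p = 0"
  shows "(\<Sum>d\<in>Dset N m. w (fst d) (snd d) * h d) = (\<Sum>p\<in>{0..N}. \<Sum>q\<in>{0..N}. w p q * h (p, q))"
proof -
  have "(\<Sum>d\<in>Dset N m. w (fst d) (snd d) * h d) = (\<Sum>d\<in>{0..N} \<times> {0..N}. w (fst d) (snd d) * h d)"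
  proof (rule sum.mono_neutral_left)
    show "\<forall>d\<in>{0..N} \<times> {0..N} - Dset N m. w (fst d) (snd d) * h d = 0"
    proof
      fix d assume d: "d \<in> {0..N} \<times> {0..N} - Dset N m"
      then have "m = HD" "fst d = snd d" "fst d \<in> {1..N}" by (cases m; auto simp: Dset_def)+
      then show "w (fst d) (snd d) * h d = 0" using assms by simp
    qed
  qed (auto simp: Dset_def)
  also have "\<dots> = (\<Sum>p\<in>{0..N}. \<Sum>q\<in>{0..N}. w p q * h (p, q))"
    by (simp add: sum.cartesian_product split_beta)
  finally show ?thesis .
qed

lemma filter_sum: fixes f :: "'a \<Rightarrow> real" shows "finite S \<Longrightarrow> (\<Sum>s\<in>{s\<in>S. P s}. f s) = (\<Sum>s\<in>S. f s * (if P s then 1 else 0))"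
  by (subst sum.inter_filter) (auto intro!: sum.cong)



definition TT :: "nat \<Rightarrow> mode \<Rightarrow> (state \<Rightarrow> real) \<Rightarrow> nat \<Rightarrow> nat \<Rightarrow> real" where
  "TT N m lam i j = (\<Sum>s\<in>{s\<in>states N m. active s i j}. lam s)"

lemma cut_decomp:
  assumes O: "0 \<in> \<Omega>" "\<Omega> \<subseteq> {0..N}"
  shows "cut_value N m lsrc ldst lam \<Omega> =
    (\<Sum>p\<in>{1..N}. if p \<in> \<Omega> then TT N m lam p (N+1) * ldst p else TT N m lam 0 p * lsrc p)"
proof -
  let ?T = "TT N m lam"
  have fin: "finite \<Omega>" using O finite_subset by blast
  have cv: "cut_value N m lsrc ldst lam \<Omega> = (\<Sum>i\<in>\<Omega>. \<Sum>j\<in>{0..N+1} - \<Omega>. ?T i j * ell N lsrc ldst j i)"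
    by (simp add: cut_value_def TT_def)
  have F0: "(\<Sum>j\<in>{0..N+1} - \<Omega>. ?T 0 j * ell N lsrc ldst j 0)
      = (\<Sum>p\<in>{1..N}. if p \<in> \<Omega> then 0 else ?T 0 p * lsrc p)"
  proof -
    have "(\<Sum>j\<in>{0..N+1} - \<Omega>. ?T 0 j * ell N lsrc ldst j 0)
        = (\<Sum>j\<in>{1..N} - \<Omega>. ?T 0 j * lsrc j)"
    proof (rule sum.mono_neutral_cong_right)
      show "\<forall>j\<in>{0..N + 1} - \<Omega> - ({1..N} - \<Omega>). ?T 0 j * ell N lsrc ldst j 0 = 0"
        by (auto simp: ell_def)
      show "\<And>j. j \<in> {1..N} - \<Omega> \<Longrightarrow> ?T 0 j * ell N lsrc ldst j 0 = ?T 0 j * lsrc j"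
        by (auto simp: ell_def)
    qed auto
    also have "\<dots> = (\<Sum>p\<in>{1..N}. if p \<in> \<Omega> then 0 else ?T 0 p * lsrc p)"
      by (rule sum.mono_neutral_cong_left) auto
    finally show ?thesis .
  qed
  have Fi: "(\<Sum>j\<in>{0..N+1} - \<Omega>. ?T i j * ell N lsrc ldst j i) = ?T i (N+1) * ldst i"
    if i: "i \<in> \<Omega> - {0}" for i
  proof -
    have iN: "i \<in> {1..N}" using i O by auto
    have "(\<Sum>j\<in>{0..N+1} - \<Omega>. ?T i j * ell N lsrc ldst j i)
        = (\<Sum>j\<in>{0..N+1} - \<Omega>. if j = N+1 then ?T i (N+1) * ldst i else 0)"
      using iN by (intro sum.cong) (auto simp: ell_def)
    also have "\<dots> = ?T i (N+1) * ldst i" using O by auto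
    finally show ?thesis .
  qed
  have "(\<Sum>i\<in>\<Omega>. \<Sum>j\<in>{0..N+1} - \<Omega>. ?T i j * ell N lsrc ldst j i)
      = (\<Sum>j\<in>{0..N+1} - \<Omega>. ?T 0 j * ell N lsrc ldst j 0)
        + (\<Sum>i\<in>\<Omega> - {0}. \<Sum>j\<in>{0..N+1} - \<Omega>. ?T i j * ell N lsrc ldst j i)"
    using fin O by (simp add: sum.remove)
  also have "(\<Sum>i\<in>\<Omega> - {0}. \<Sum>j\<in>{0..N+1} - \<Omega>. ?T i j * ell N lsrc ldst j i)
      = (\<Sum>i\<in>\<Omega> - {0}. ?T i (N+1) * ldst i)"
    using Fi by (rule sum.cong[OF refl])
  also have "\<dots> = (\<Sum>p\<in>{1..N}. if p \<in> \<Omega> then ?T p (N+1) * ldst p else 0)"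
    using O by (intro sum.mono_neutral_cong_left) auto
  finally show ?thesis using cv F0 by (simp add: sum.distrib[symmetric] if_distrib cong: if_cong)
qed



lemma ind_card_le:
  assumes "finite A" "finite F" "card F \<le> 1" "\<And>p. Q p \<Longrightarrow> p \<in> F"
  shows "(\<Sum>p\<in>A. (if Q p then 1 else 0 :: real)) \<le> 1"
proof -
  have "(\<Sum>p\<in>A. (if Q p then 1 else 0 :: real)) \<le> (\<Sum>p\<in>A. (if p \<in> F then 1 else 0))"
    using assms(4) by (intro sum_mono) auto
  also have "\<dots> = real (card (A \<inter> F))" using sum.inter_restrict[OF assms(1), of "\<lambda>_. 1::real" F] by simp
  also have "\<dots> \<le> real (card F)" using assms(2) by (simp add: card_mono)
  also have "\<dots> \<le> 1" using assms(3) by simp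
  finally show ?thesis .
qed

lemma sum_TT_le:
  assumes pv: "prob_vec N m lam" and fS: "finite (states N m)"
    and ind: "\<And>s. s \<in> states N m \<Longrightarrow> (\<Sum>p\<in>{1..N}. (if Q s p then 1 else 0 :: real)) \<le> 1"
  shows "(\<Sum>p\<in>{1..N}. \<Sum>s\<in>{s\<in>states N m. Q s p}. lam s) \<le> 1"
proof -
  have "(\<Sum>p\<in>{1..N}. \<Sum>s\<in>{s\<in>states N m. Q s p}. lam s)
      = (\<Sum>p\<in>{1..N}. \<Sum>s\<in>states N m. lam s * (if Q s p then 1 else 0))"
    using fS by (simp add: filter_sum)
  also have "\<dots> = (\<Sum>s\<in>states N m. lam s * (\<Sum>p\<in>{1..N}. (if Q s p then 1 else 0)))"
    by (subst sum.swap) (simp add: sum_distrib_left)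
  also have "\<dots> \<le> (\<Sum>s\<in>states N m. lam s * 1)"
    using pv ind by (intro sum_mono mult_left_mono) (auto simp: prob_vec_def)
  also have "\<dots> = 1" using pv by (simp add: prob_vec_def)
  finally show ?thesis .
qed

lemma st_fin: "s \<in> states N m \<Longrightarrow> i \<le> N+1 \<Longrightarrow> finite (fst s i) \<and> card (fst s i) \<le> 1 \<and> finite (snd s i) \<and> card (snd s i) \<le> 1"
proof -
  assume s: "s \<in> states N m" and i: "i \<le> N+1"
  obtain st sr where se: "s = (st, sr)" by (cases s)
  have "\<forall>i\<in>{0..N+1}. st i \<subseteq> {1..N+1} - {i} \<and> card (st i) \<le> 1 \<and> sr i \<subseteq> {0..N} - {i} \<and> card (sr i) \<le> 1"
    using s se unfolding states_def by auto
  then have "st i \<subseteq> {1..N+1} - {i} \<and> card (st i) \<le> 1 \<and> sr i \<subseteq> {0..N} - {i} \<and> card (sr i) \<le> 1"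
    using i by auto
  then have "fst s i \<subseteq> {1..N+1}" "card (fst s i) \<le> 1" "snd s i \<subseteq> {0..N}" "card (snd s i) \<le> 1"
    using se by auto
  then show ?thesis using finite_subset by blast
qed

lemma TT_nonneg: "prob_vec N m lam \<Longrightarrow> TT N m lam i j \<ge> 0"
  unfolding TT_def prob_vec_def by (intro sum_nonneg) auto

lemma sumA: assumes pv: "prob_vec N m lam" and fS: "finite (states N m)"
  shows "(\<Sum>p\<in>{1..N}. TT N m lam 0 p) \<le> 1"
  unfolding TT_def
proof (rule sum_TT_le[OF pv fS])
  fix s assume s: "s \<in> states N m"
  show "(\<Sum>p\<in>{1..N}. (if active s 0 p then 1 else 0 :: real)) \<le> 1"
    using st_fin[OF s, of 0] by (intro ind_card_le[of _ "fst s 0"]) (auto simp: active_def)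
qed

lemma sumB: assumes pv: "prob_vec N m lam" and fS: "finite (states N m)"
  shows "(\<Sum>p\<in>{1..N}. TT N m lam p (N+1)) \<le> 1"
  unfolding TT_def
proof (rule sum_TT_le[OF pv fS])
  fix s assume s: "s \<in> states N m"
  show "(\<Sum>p\<in>{1..N}. (if active s p (N+1) then 1 else 0 :: real)) \<le> 1"
    using st_fin[OF s, of "N+1"] by (intro ind_card_le[of _ "snd s (N+1)"]) (auto simp: active_def)
qed

lemma HD_AB: assumes pv: "prob_vec N HD lam" and fS: "finite (states N HD)" and p: "p \<in> {1..N}"
  shows "TT N HD lam 0 p + TT N HD lam p (N+1) \<le> 1"
proof -
  have ex: "\<not> (active s 0 p \<and> active s p (N+1))" if s: "s \<in> states N HD" for s
  proof
    assume a: "active s 0 p \<and> active s p (N+1)"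
    have f: "finite (fst s p)" "finite (snd s p)" using st_fin[OF s, of p] p by auto
    have "card (fst s p) \<ge> 1" "card (snd s p) \<ge> 1"
      using a f by (auto simp: active_def card_gt_0_iff Suc_le_eq)
    moreover have "card (fst s p) + card (snd s p) \<le> 1" using s p by (auto simp: states_def)
    ultimately show False by simp
  qed
  have "TT N HD lam 0 p + TT N HD lam p (N+1)
     = (\<Sum>s\<in>states N HD. lam s * ((if active s 0 p then 1 else 0) + (if active s p (N+1) then 1 else 0)))"
    unfolding TT_def using fS by (simp add: filter_sum sum.distrib[symmetric] algebra_simps)
  also have "\<dots> \<le> (\<Sum>s\<in>states N HD. lam s * 1)"
    using pv ex by (intro sum_mono mult_left_mono) (auto simp: prob_vec_def)
  also have "\<dots> = 1" using pv by (simp add: prob_vec_def)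
  finally show ?thesis .
qed

lemma le_sum1: fixes N :: nat assumes "\<forall>p\<in>{1..N}. f p \<ge> (0::real)" "(\<Sum>p\<in>{1..N}. f p) \<le> 1" "p \<in> {1..N}"
  shows "f p \<le> 1"
proof -
  have "f p \<le> sum f {1..N}" by (rule member_le_sum) (use assms in auto)
  then show ?thesis using assms by linarith
qed

lemma Cp_pos: "lsrc p > 0 \<Longrightarrow> ldst p > 0 \<Longrightarrow> Cp m lsrc ldst p > 0"
  by (auto simp: Cp_def)

lemma finite_Omegas: "finite {\<Omega>. 0 \<in> \<Omega> \<and> \<Omega> \<subseteq> {0..N::nat}}"
  by (rule finite_subset[of _ "Pow {0..N}"]) auto

lemma dir1:
  assumes pl: "\<forall>p\<in>{1..N}. lsrc p > 0" and pr: "\<forall>p\<in>{1..N}. ldst p > 0"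
    and pv: "prob_vec N m lam"
  shows "\<exists>x. P1d_feasible N m lsrc ldst x \<and>
    Min ((\<lambda>\<Omega>. cut_value N m lsrc ldst lam \<Omega>) ` {\<Omega>. 0 \<in> \<Omega> \<and> \<Omega> \<subseteq> {0..N}}) \<le> (\<Sum>p=1..N. x p * Cp m lsrc ldst p)"
proof -
  have fS: "finite (states N m)" by (rule finite_states)
  define A where "A p = TT N m lam 0 p" for p
  define B where "B p = TT N m lam p (N+1)" for p
  have A0: "\<forall>p\<in>{1..N}. A p \<ge> 0" and B0: "\<forall>p\<in>{1..N}. B p \<ge> 0"
    using TT_nonneg[OF pv] by (auto simp: A_def B_def)
  have sA: "(\<Sum>p\<in>{1..N}. A p) \<le> 1" using sumA[OF pv fS] by (simp add: A_def)
  have sB: "(\<Sum>p\<in>{1..N}. B p) \<le> 1" using sumB[OF pv fS] by (simp add: B_def)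
  have A1: "A p \<le> 1" if "p \<in> {1..N}" for p using le_sum1[OF A0 sA that] .
  have B1: "B p \<le> 1" if "p \<in> {1..N}" for p using le_sum1[OF B0 sB that] .
  define t where "t p = min (A p * lsrc p) (B p * ldst p)" for p
  define x where "x p = t p / Cp m lsrc ldst p" for p
  have Cpos: "Cp m lsrc ldst p > 0" if "p \<in> {1..N}" for p using Cp_pos pl pr that by blast
  have xC: "x p * Cp m lsrc ldst p = t p" if "p \<in> {1..N}" for p
    using Cpos[OF that] by (simp add: x_def)
  have t0: "t p \<ge> 0" if "p \<in> {1..N}" for p
  proof -
    have "A p \<ge> 0" "B p \<ge> 0" "lsrc p > 0" "ldst p > 0" using A0 B0 pl pr that by auto
    then show ?thesis by (simp add: t_def)
  qed
  have tle: "t p \<le> Cp m lsrc ldst p" if p: "p \<in> {1..N}" for p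
  proof (cases m)
    case FD
    have "A p * lsrc p \<le> lsrc p" using A1[OF p] pl p by (simp add: mult_le_cancel_right1)
    moreover have "B p * ldst p \<le> ldst p" using B1[OF p] pr p by (simp add: mult_le_cancel_right1)
    ultimately show ?thesis using FD by (auto simp: t_def Cp_def)
  next
    case HD
    let ?l = "lsrc p" and ?r = "ldst p"
    have l: "?l > 0" and r: "?r > 0" using pl pr p by auto
    have AB: "A p + B p \<le> 1" using HD_AB[of N lam p] pv p HD unfolding A_def B_def
      using finite_states by blast
    have "t p * ?r \<le> A p * ?l * ?r" using r by (intro mult_right_mono) (auto simp: t_def)
    moreover have "t p * ?l \<le> B p * ?r * ?l" using l by (intro mult_right_mono) (auto simp: t_def)
    ultimately have "t p * (?l + ?r) \<le> (A p + B p) * (?l * ?r)" by (simp add: algebra_simps)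
    also have "\<dots> \<le> ?l * ?r" using AB l r by (simp add: mult_le_cancel_right1)
    finally have "t p * (?l + ?r) \<le> ?l * ?r" .
    then show ?thesis using HD l r by (simp add: Cp_def pos_le_divide_eq)
  qed
  have feas: "P1d_feasible N m lsrc ldst x"
    unfolding P1d_feasible_def
  proof (intro conjI ballI)
    fix p assume p: "p \<in> {1..N}"
    show "0 \<le> x p" using t0[OF p] Cpos[OF p] by (simp add: x_def)
    show "x p \<le> 1" using tle[OF p] Cpos[OF p] by (simp add: x_def)
  next
    have "(\<Sum>p = 1..N. x p * Cp m lsrc ldst p / lsrc p) \<le> (\<Sum>p = 1..N. A p)"
    proof (rule sum_mono)
      fix p assume p: "p \<in> {1..N}"
      have "t p \<le> A p * lsrc p" by (simp add: t_def)
      then show "x p * Cp m lsrc ldst p / lsrc p \<le> A p" using xC[OF p] pl p by (simp add: divide_le_eq)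
    qed
    then show "(\<Sum>p = 1..N. x p * Cp m lsrc ldst p / lsrc p) \<le> 1" using sA by linarith
  next
    have "(\<Sum>p = 1..N. x p * Cp m lsrc ldst p / ldst p) \<le> (\<Sum>p = 1..N. B p)"
    proof (rule sum_mono)
      fix p assume p: "p \<in> {1..N}"
      have "t p \<le> B p * ldst p" by (simp add: t_def)
      then show "x p * Cp m lsrc ldst p / ldst p \<le> B p" using xC[OF p] pr p by (simp add: divide_le_eq)
    qed
    then show "(\<Sum>p = 1..N. x p * Cp m lsrc ldst p / ldst p) \<le> 1" using sB by linarith
  qed
  define Om where "Om = insert 0 {p\<in>{1..N}. B p * ldst p \<le> A p * lsrc p}"
  have O: "0 \<in> Om" "Om \<subseteq> {0..N}" by (auto simp: Om_def)
  have "cut_value N m lsrc ldst lam Om = (\<Sum>p\<in>{1..N}. t p)"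
    unfolding cut_decomp[OF O] A_def[symmetric] B_def[symmetric]
    by (intro sum.cong) (auto simp: Om_def t_def)
  also have "\<dots> = (\<Sum>p=1..N. x p * Cp m lsrc ldst p)" using xC by simp
  finally have cO: "cut_value N m lsrc ldst lam Om = (\<Sum>p=1..N. x p * Cp m lsrc ldst p)" .
  have "Min ((\<lambda>\<Omega>. cut_value N m lsrc ldst lam \<Omega>) ` {\<Omega>. 0 \<in> \<Omega> \<and> \<Omega> \<subseteq> {0..N}}) \<le> cut_value N m lsrc ldst lam Om"
    using O finite_Omegas by (intro Min_le) auto
  then show ?thesis using feas cO by auto
qed



lemma sum_hilo:
  assumes "\<forall>i\<in>{1..N}. a i \<ge> 0"
  shows "(\<Sum>p\<in>{0..N}. hi a N p - lo a N p) = 1"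
proof -
  have "(\<Sum>p\<in>{1..N}. hi a N p - lo a N p) = (\<Sum>p\<in>{1..N}. a p)"
  proof (intro sum.cong refl)
    fix p assume p: "p \<in> {1..N}"
    then have "cum a p = cum a (p - 1) + a p" using cum_Suc[of a "p - 1"] by simp
    then show "hi a N p - lo a N p = a p" using p by (simp add: hi_def lo_def)
  qed
  then show ?thesis by (simp add: sum.atLeast_Suc_atMost hi_def lo_def cum_def)
qed

lemma dir2:
  assumes pl: "\<forall>p\<in>{1..N}. lsrc p > 0" and pr: "\<forall>p\<in>{1..N}. ldst p > 0"
    and feas: "P1d_feasible N m lsrc ldst x"
  shows "\<exists>lam. prob_vec N m lam \<and>
    (\<Sum>p=1..N. x p * Cp m lsrc ldst p) \<le> Min ((\<lambda>\<Omega>. cut_value N m lsrc ldst lam \<Omega>) ` {\<Omega>. 0 \<in> \<Omega> \<and> \<Omega> \<subseteq> {0..N}})"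
proof -
  define a where "a p = x p * Cp m lsrc ldst p / lsrc p" for p
  define b where "b p = x p * Cp m lsrc ldst p / ldst p" for p
  have Cpos: "Cp m lsrc ldst p > 0" if "p \<in> {1..N}" for p using Cp_pos pl pr that by blast
  have x01: "0 \<le> x p" "x p \<le> 1" if "p \<in> {1..N}" for p using feas that by (auto simp: P1d_feasible_def)
  have a0: "\<forall>i\<in>{1..N}. a i \<ge> 0" using x01 Cpos pl by (auto simp: a_def less_imp_le)
  have b0: "\<forall>i\<in>{1..N}. b i \<ge> 0" using x01 Cpos pr by (auto simp: b_def less_imp_le)
  have ca: "cum a N \<le> 1" using feas by (simp add: P1d_feasible_def cum_def a_def)
  have cb: "cum b N \<le> 1" using feas by (simp add: P1d_feasible_def cum_def b_def)
  have al: "a p * lsrc p = x p * Cp m lsrc ldst p" if "p \<in> {1..N}" for p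
  proof - have "lsrc p > 0" using pl that by auto then show ?thesis by (simp add: a_def) qed
  have bl: "b p * ldst p = x p * Cp m lsrc ldst p" if "p \<in> {1..N}" for p
  proof - have "ldst p > 0" using pr that by auto then show ?thesis by (simp add: b_def) qed
  have ab: "a p + b p \<le> 1" if "m = HD" "p \<in> {1..N}" for p
  proof -
    have l: "lsrc p > 0" and r: "ldst p > 0" using pl pr that by auto
    have lr: "lsrc p + ldst p > 0" using l r by simp
    have e1: "Cp m lsrc ldst p / lsrc p = ldst p / (lsrc p + ldst p)"
      using that l lr by (simp add: Cp_def divide_divide_eq_left)
    have e2: "Cp m lsrc ldst p / ldst p = lsrc p / (lsrc p + ldst p)"
      using that r lr by (simp add: Cp_def divide_divide_eq_left)
    have "a p + b p = x p * (Cp m lsrc ldst p / lsrc p) + x p * (Cp m lsrc ldst p / ldst p)"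
      by (simp add: a_def b_def)
    also have "\<dots> = x p * ((ldst p + lsrc p) / (lsrc p + ldst p))"
      unfolding e1 e2 by (simp add: add_divide_distrib distrib_left)
    also have "\<dots> = x p" using lr by (simp add: add.commute)
    finally have "a p + b p = x p" .
    then show ?thesis using x01 that by simp
  qed
  obtain s where s: "0 \<le> s" "s \<le> 1"
    and sd: "m = HD \<Longrightarrow> \<forall>p\<in>{1..N}. cum a p - cum b (p - 1) \<le> s \<and> s + cum b p - 1 \<le> cum a (p - 1)"
  proof (cases m)
    case FD then show ?thesis using that[of 0] by simp
  next
    case HD
    then obtain s where "0 \<le> s \<and> s \<le> 1 \<and> (\<forall>p\<in>{1..N}. cum a p - cum b (p - 1) \<le> s \<and> s + cum b p - 1 \<le> cum a (p - 1))"
      using exists_s[OF a0 ca b0 cb] ab by blast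
    then show ?thesis using that by blast
  qed
  define w where "w = pii a b N s"
  have diag: "m = HD \<Longrightarrow> \<forall>p\<in>{1..N}. w p p = 0"
    using sd by (auto simp: w_def intro!: pii_diag)
  define lam where "lam = lamOf N m w"
  have wn: "\<And>p q. w p q \<ge> 0" by (simp add: w_def pii_nonneg)
  have gsum: "(\<Sum>s\<in>states N m. lam s * g s) = (\<Sum>p\<in>{0..N}. \<Sum>q\<in>{0..N}. w p q * g (mk N p q))" for g
    unfolding lam_def lam_sum using sumD[of m N w "\<lambda>d. g (mk N (fst d) (snd d))", OF diag] by simp
  have pv: "prob_vec N m lam"
  proof -
    have "(\<Sum>s\<in>states N m. lam s) = (\<Sum>s\<in>states N m. lam s * 1)" by simp
    also have "\<dots> = (\<Sum>p\<in>{0..N}. \<Sum>q\<in>{0..N}. w p q)" using gsum[of "\<lambda>_. 1"] by simp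
    also have "\<dots> = (\<Sum>p\<in>{0..N}. hi a N p - lo a N p)"
      by (intro sum.cong refl) (simp add: w_def pii_row[OF a0 ca b0 cb s])
    also have "\<dots> = 1" by (rule sum_hilo[OF a0])
    finally show ?thesis unfolding prob_vec_def lam_def using lamOf_nonneg wn by auto
  qed
  have TA: "TT N m lam 0 p = a p" if p: "p \<in> {1..N}" for p
  proof -
    have "TT N m lam 0 p = (\<Sum>p'\<in>{0..N}. \<Sum>q\<in>{0..N}. w p' q * (if active (mk N p' q) 0 p then 1 else 0))"
      unfolding TT_def using finite_states gsum by (simp add: filter_sum)
    also have "\<dots> = (\<Sum>p'\<in>{0..N}. if p' = p then (\<Sum>q\<in>{0..N}. w p' q) else 0)"
      using p by (intro sum.cong refl) (auto simp: active_mk_src)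
    also have "\<dots> = (\<Sum>q\<in>{0..N}. w p q)" using p by simp
    also have "\<dots> = a p"
    proof -
      have "cum a p = cum a (p - 1) + a p" using cum_Suc[of a "p - 1"] p by simp
      then show ?thesis using p pii_row[OF a0 ca b0 cb s, of p] by (simp add: w_def hi_def lo_def)
    qed
    finally show ?thesis .
  qed
  have TB: "TT N m lam p (N+1) = b p" if p: "p \<in> {1..N}" for p
  proof -
    have "TT N m lam p (N+1) = (\<Sum>p'\<in>{0..N}. \<Sum>q\<in>{0..N}. w p' q * (if active (mk N p' q) p (N+1) then 1 else 0))"
      unfolding TT_def using finite_states gsum by (simp add: filter_sum)
    also have "\<dots> = (\<Sum>p'\<in>{0..N}. w p' p)"
    proof (intro sum.cong refl)
      fix p' assume "p' \<in> {0..N}"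
      have "(\<Sum>q\<in>{0..N}. w p' q * (if active (mk N p' q) p (N+1) then 1 else 0))
          = (\<Sum>q\<in>{0..N}. if q = p then w p' q else 0)"
        using p active_mk_dst[OF p] by (intro sum.cong refl) auto
      also have "\<dots> = w p' p" using p by simp
      finally show "(\<Sum>q\<in>{0..N}. w p' q * (if active (mk N p' q) p (N+1) then 1 else 0)) = w p' p" .
    qed
    also have "\<dots> = b p"
    proof -
      have "cum b p = cum b (p - 1) + b p" using cum_Suc[of b "p - 1"] p by simp
      then show ?thesis using p pii_col[OF a0 ca b0 cb s, of p] by (simp add: w_def hi_def lo_def)
    qed
    finally show ?thesis .
  qed
  have cut: "cut_value N m lsrc ldst lam \<Omega> = (\<Sum>p=1..N. x p * Cp m lsrc ldst p)"
    if "\<Omega> \<in> {\<Omega>. 0 \<in> \<Omega> \<and> \<Omega> \<subseteq> {0..N}}" for \<Omega>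
  proof -
    have O: "0 \<in> \<Omega>" "\<Omega> \<subseteq> {0..N}" using that by auto
    show ?thesis unfolding cut_decomp[OF O]
    proof (intro sum.cong refl)
      fix p assume p: "p \<in> {1..N}"
      show "(if p \<in> \<Omega> then TT N m lam p (N+1) * ldst p else TT N m lam 0 p * lsrc p) = x p * Cp m lsrc ldst p"
        using TA[OF p] TB[OF p] al[OF p] bl[OF p] by simp
    qed
  qed
  have "(\<Sum>p=1..N. x p * Cp m lsrc ldst p) \<le> Min ((\<lambda>\<Omega>. cut_value N m lsrc ldst lam \<Omega>) ` {\<Omega>. 0 \<in> \<Omega> \<and> \<Omega> \<subseteq> {0..N}})"
  proof (rule Min.boundedI)
    show "finite ((\<lambda>\<Omega>. cut_value N m lsrc ldst lam \<Omega>) ` {\<Omega>. 0 \<in> \<Omega> \<and> \<Omega> \<subseteq> {0..N}})"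
      using finite_Omegas by simp
    have "{0} \<in> {\<Omega>. 0 \<in> \<Omega> \<and> \<Omega> \<subseteq> {0..N}}" by simp
    then show "(\<lambda>\<Omega>. cut_value N m lsrc ldst lam \<Omega>) ` {\<Omega>. 0 \<in> \<Omega> \<and> \<Omega> \<subseteq> {0..N}} \<noteq> {}" by blast
  qed (use cut in auto)
  then show ?thesis using pv by blast
qed



theorem lemma4:
  fixes N :: nat and m :: mode and lsrc ldst :: "nat \<Rightarrow> real"
  assumes "\<forall>p\<in>{1..N}. lsrc p \<in> \<rat> \<and> lsrc p > 0"
      and "\<forall>p\<in>{1..N}. ldst p \<in> \<rat> \<and> ldst p > 0"
  shows "C_cs_iid N m lsrc ldst = P1d_opt N m lsrc ldst"
proof -
  have pl: "\<forall>p\<in>{1..N}. lsrc p > 0" and pr: "\<forall>p\<in>{1..N}. ldst p > 0" using assms by auto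
  define F where "F lam = Min ((\<lambda>\<Omega>. cut_value N m lsrc ldst lam \<Omega>) ` {\<Omega>. 0 \<in> \<Omega> \<and> \<Omega> \<subseteq> {0..N}})" for lam
  define G where "G x = (\<Sum>p=1..N. x p * Cp m lsrc ldst p)" for x
  let ?PV = "{lam. prob_vec N m lam}" and ?FS = "{x. P1d_feasible N m lsrc ldst x}"
  have C: "C_cs_iid N m lsrc ldst = Sup (F ` ?PV)" by (simp add: C_cs_iid_def F_def)
  have P: "P1d_opt N m lsrc ldst = Sup (G ` ?FS)" by (simp add: P1d_opt_def G_def)
  have bound: "G x \<le> (\<Sum>p=1..N. Cp m lsrc ldst p)" if "x \<in> ?FS" for x
    unfolding G_def
  proof (rule sum_mono)
    fix p assume p: "p \<in> {1..N}"
    have "x p \<le> 1" using that p by (auto simp: P1d_feasible_def)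
    moreover have "Cp m lsrc ldst p > 0" using Cp_pos pl pr p by blast
    ultimately show "x p * Cp m lsrc ldst p \<le> Cp m lsrc ldst p" by (simp add: mult_le_cancel_right1)
  qed
  have f0: "(\<lambda>_. 0) \<in> ?FS" by (simp add: P1d_feasible_def)
  have FSne: "G ` ?FS \<noteq> {}" using f0 by blast
  have bddG: "bdd_above (G ` ?FS)"
  proof (rule bdd_aboveI2)
    fix x assume "x \<in> ?FS" then show "G x \<le> (\<Sum>p=1..N. Cp m lsrc ldst p)" by (rule bound)
  qed
  have d1: "\<exists>x\<in>?FS. F lam \<le> G x" if "lam \<in> ?PV" for lam
    using dir1[OF pl pr, of m lam] that by (auto simp: F_def G_def)
  have d2: "\<exists>lam\<in>?PV. G x \<le> F lam" if "x \<in> ?FS" for x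
    using dir2[OF pl pr, of m x] that by (auto simp: F_def G_def)
  have PVne: "F ` ?PV \<noteq> {}" using d2[OF f0] by blast
  have bddF: "bdd_above (F ` ?PV)"
  proof (rule bdd_aboveI2)
    fix lam assume "lam \<in> ?PV"
    then obtain x where "x \<in> ?FS" "F lam \<le> G x" using d1 by blast
    then show "F lam \<le> (\<Sum>p=1..N. Cp m lsrc ldst p)" using bound by (meson order_trans)
  qed
  have le1: "Sup (F ` ?PV) \<le> Sup (G ` ?FS)"
  proof (rule cSup_least[OF PVne])
    fix y assume "y \<in> F ` ?PV"
    then obtain lam where "lam \<in> ?PV" "y = F lam" by blast
    then obtain x where "x \<in> ?FS" "y \<le> G x" using d1 by blast
    then show "y \<le> Sup (G ` ?FS)" using cSup_upper[OF _ bddG] by (meson image_eqI order_trans)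
  qed
  have le2: "Sup (G ` ?FS) \<le> Sup (F ` ?PV)"
  proof (rule cSup_least[OF FSne])
    fix y assume "y \<in> G ` ?FS"
    then obtain x where "x \<in> ?FS" "y = G x" by blast
    then obtain lam where "lam \<in> ?PV" "y \<le> F lam" using d2 by blast
    then show "y \<le> Sup (F ` ?PV)" using cSup_upper[OF _ bddF] by (meson image_eqI order_trans)
  qed
  show ?thesis using C P le1 le2 by linarith
qed


end
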